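(* Let $\mu$ be a fixed probability distribution on a measurable space $\mathcal{X}$, $\varepsilon\ge0$, $\delta\in[0,1]$. For $\lambda\in[0,1]$ define the sampler $\mathbf{Q}_\lambda$ on all distributions $P$ on $\mathcal{X}$ by $\mathbf{Q}_\lambda(A\mid P)=\lambda P(A)+(1-\lambda)\mu(A)$ for measurable $A\subseteq\mathcal{X}$. If $\mathbf{Q}_{\lambda_1}$ is $(\varepsilon,\delta)$-LDP for some $\lambda_1\in[0,1]$, then $\mathbf{Q}_{\lambda_2}$ is $(\varepsilon,\delta)$-LDP for every $\lambda_2\in[0,\lambda_1]$.
   Context: A sampler $\mathbf{Q}$ defined on a class of distributions is $(\varepsilon,\delta)$-LDP if $\mathbf{Q}(A\mid P)\le e^\varepsilon\mathbf{Q}(A\mid P')+\delta$ for every pair of inputs $P,P'$ in its domain and every measurable $A$. *)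

theory Defs
  imports "HOL-Probability.Probability"
begin

definition distributions :: "'a measure \<Rightarrow> 'a measure set" where
  "distributions M = {P. prob_space P \<and> sets P = sets M}"

text \<open>A sampler maps each input distribution to a distribution on the output space,
  given by its probability function on measurable sets.
  (eps,delta)-LDP on a domain D of inputs, with output sigma-algebra given by M.\<close>
definition is_LDP :: "'a measure \<Rightarrow> 'b measure set \<Rightarrow> ('b measure \<Rightarrow> 'a set \<Rightarrow> real)
    \<Rightarrow> real \<Rightarrow> real \<Rightarrow> bool" where
  "is_LDP M D Q \<epsilon> \<delta> \<longleftrightarrow>
     (\<forall>P\<in>D. \<forall>P'\<in>D. \<forall>A\<in>sets M. Q P A \<le> exp \<epsilon> * Q P' A + \<delta>)"

definition mix_sampler :: "'a measure \<Rightarrow> real \<Rightarrow> 'a measure \<Rightarrow> 'a set \<Rightarrow> real" where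
  "mix_sampler \<mu> l P A = l * measure P A + (1 - l) * measure \<mu> A"

end

theory Submission
  imports Defs
begin

lemma alg:
  fixes a b m e d l1 l2 :: real
  assumes h: "l1 * a + (1 - l1) * m \<le> e * (l1 * b + (1 - l1) * m) + d"
    and m: "0 \<le> m" and e: "1 \<le> e" and d: "0 \<le> d"
    and l1: "0 < l1" and l2: "0 \<le> l2" "l2 \<le> l1"
  shows "l2 * a + (1 - l2) * m \<le> e * (l2 * b + (1 - l2) * m) + d"
proof -
  define t where "t = l2 / l1"
  have t0: "0 \<le> t" and t1: "t \<le> 1" using l1 l2 by (auto simp: t_def)
  have tl: "t * l1 = l2" using l1 by (simp add: t_def)
  have A: "t * (l1 * a + (1 - l1) * m) \<le> t * (e * (l1 * b + (1 - l1) * m) + d)"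
    using h t0 by (rule mult_left_mono)
  have B: "(1 - t) * m \<le> (1 - t) * (e * m) + (1 - t) * d"
  proof -
    have "m \<le> e * m + d" using m e d proof -
      have "1 * m \<le> e * m" by (rule mult_right_mono[OF e m])
      then show ?thesis using d by simp
    qed
    then show ?thesis using t1 by (metis diff_ge_0_iff_ge distrib_left mult_left_mono)
  qed
  have "l2 * a + (1 - l2) * m = t * (l1 * a + (1 - l1) * m) + (1 - t) * m"
    using tl by (simp add: algebra_simps)
  also have "\<dots> \<le> t * (e * (l1 * b + (1 - l1) * m) + d) + ((1 - t) * (e * m) + (1 - t) * d)"
    using A B by linarith
  also have "\<dots> = e * (l2 * b + (1 - l2) * m) + d"
    using tl by (simp add: algebra_simps)
  finally show ?thesis .
qed

theorem lemma1:
  fixes \<mu> :: "'a measure" and \<epsilon> \<delta> l\<^sub>1 l\<^sub>2 :: real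
  assumes "prob_space \<mu>"
    and "\<epsilon> \<ge> 0" and "0 \<le> \<delta>" and "\<delta> \<le> 1"
    and "0 \<le> l\<^sub>1" and "l\<^sub>1 \<le> 1"
    and "is_LDP \<mu> (distributions \<mu>) (mix_sampler \<mu> l\<^sub>1) \<epsilon> \<delta>"
    and "0 \<le> l\<^sub>2" and "l\<^sub>2 \<le> l\<^sub>1"
  shows "is_LDP \<mu> (distributions \<mu>) (mix_sampler \<mu> l\<^sub>2) \<epsilon> \<delta>"
proof (cases "l\<^sub>1 = 0")
  case True
  then have "l\<^sub>2 = l\<^sub>1" using assms by linarith
  then show ?thesis using assms(7) by simp
next
  case False
  then have l1: "0 < l\<^sub>1" using assms by linarith
  have e: "1 \<le> exp \<epsilon>" using assms(2) by simp
  show ?thesis unfolding is_LDP_def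
  proof (intro ballI)
    fix P P' A assume P: "P \<in> distributions \<mu>" and P': "P' \<in> distributions \<mu>" and A: "A \<in> sets \<mu>"
    have h: "mix_sampler \<mu> l\<^sub>1 P A \<le> exp \<epsilon> * mix_sampler \<mu> l\<^sub>1 P' A + \<delta>"
      using assms(7) P P' A unfolding is_LDP_def by blast
    show "mix_sampler \<mu> l\<^sub>2 P A \<le> exp \<epsilon> * mix_sampler \<mu> l\<^sub>2 P' A + \<delta>"
      unfolding mix_sampler_def
      by (rule alg[OF h[unfolded mix_sampler_def] _ e assms(3) l1 assms(8) assms(9)]) simp
  qed
qed

end
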